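(* Let $\ell\in\mathbb{N}$ and let $\rho$ be a self-avoiding walk of length $\ell$ in $\mathbb{Z}^2$ such that $y(\rho_0)=\min_{0\le i\le\ell}y(\rho_i)$ and $y(\rho_\ell)=\max_{0\le i\le\ell}y(\rho_i)$. Let $h\in\mathbb{N}$. If $(j_1,k_1)\ne(j_2,k_2)$ are two right-detachable $\rho$-adjacencies of gap $h$, then $|k_2-k_1|\ge h$.
   Context: For a self-avoiding walk $\rho$ of length $\ell$ in $\mathbb{Z}^2$, an index pair $(j,k)$ with $0\le j<k\le\ell$ is a right-detachable $\rho$-adjacency of gap $k-j$ if: (i) $\{\rho_j,\rho_k\}$ are the endpoints of a vertical unit edge; (ii) letting $P$ be the unit square (plaquette) whose right side is this edge, the two horizontal edges of $P$ are traversed by $\rho$ and the two vertical edges of $P$ are not; (iii) the edge set obtained from the edges of $\rho$ by removing the two horizontal edges of $P$ and adding its two vertical edges is the disjoint union of a self-avoiding walk $\rho'$ and a self-avoiding polygon $Q$; (iv) for every positive integer $t$, the translate $Q+(t,0)$ is disjoint from $\rho'$. *)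

theory Defs
  imports Main
begin

type_synonym pt = "int \<times> int"

definition nbr :: "pt \<Rightarrow> pt \<Rightarrow> bool" where
  "nbr a b \<longleftrightarrow> \<bar>fst a - fst b\<bar> + \<bar>snd a - snd b\<bar> = 1"

definition saw :: "(nat \<Rightarrow> pt) \<Rightarrow> nat \<Rightarrow> bool" where
  "saw r m \<longleftrightarrow> inj_on r {0..m} \<and> (\<forall>i<m. nbr (r i) (r (Suc i)))"

definition walk_verts :: "(nat \<Rightarrow> pt) \<Rightarrow> nat \<Rightarrow> pt set" where
  "walk_verts r m = r ` {0..m}"

text \<open>Undirected unit edges are represented as two-element vertex sets.\<close>
definition walk_edges :: "(nat \<Rightarrow> pt) \<Rightarrow> nat \<Rightarrow> pt set set" where
  "walk_edges r m = {{r i, r (Suc i)} | i. i < m}"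

definition sap :: "(nat \<Rightarrow> pt) \<Rightarrow> nat \<Rightarrow> bool" where
  "sap q n \<longleftrightarrow> 3 \<le> n \<and> inj_on q {..<n} \<and> (\<forall>i<n. nbr (q i) (q (Suc i mod n)))"

definition poly_verts :: "(nat \<Rightarrow> pt) \<Rightarrow> nat \<Rightarrow> pt set" where
  "poly_verts q n = q ` {..<n}"

definition poly_edges :: "(nat \<Rightarrow> pt) \<Rightarrow> nat \<Rightarrow> pt set set" where
  "poly_edges q n = {{q i, q (Suc i mod n)} | i. i < n}"

text \<open>The vertical edge {rho_j, rho_k} = {(x,y),(x,y+1)} is the right side of the
  plaquette with corners (x-1,y),(x,y),(x-1,y+1),(x,y+1).\<close>
definition right_detachable :: "(nat \<Rightarrow> pt) \<Rightarrow> nat \<Rightarrow> nat \<Rightarrow> nat \<Rightarrow> bool" where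
  "right_detachable \<rho> l j k \<longleftrightarrow> j < k \<and> k \<le> l \<and>
     (\<exists>x y. {\<rho> j, \<rho> k} = {(x, y), (x, y + 1)} \<and>
       (let H = {{(x - 1, y), (x, y)}, {(x - 1, y + 1), (x, y + 1)}};
            V = {{(x - 1, y), (x - 1, y + 1)}, {(x, y), (x, y + 1)}};
            E = walk_edges \<rho> l
        in H \<subseteq> E \<and> V \<inter> E = {} \<and>
           (\<exists>r m q n. saw r m \<and> sap q n \<and>
              (E - H) \<union> V = walk_edges r m \<union> poly_edges q n \<and>
              walk_verts r m \<inter> poly_verts q n = {} \<and>
              (\<forall>t::int. t > 0 \<longrightarrow>
                 (\<lambda>v. (fst v + t, snd v)) ` poly_verts q n \<inter> walk_verts r m = {}))))"

end

theory Submission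
  imports Defs
begin

lemma edge_eq:
  assumes "saw \<rho> l" "i < l" "p \<le> l" "{\<rho> i, \<rho> (Suc i)} = {u, \<rho> p}"
  shows "(i = p \<and> \<rho> (Suc i) = u) \<or> (Suc i = p \<and> \<rho> i = u)"
proof -
  have inj: "inj_on \<rho> {0..l}" using assms(1) unfolding saw_def by auto
  from assms(4) have "(\<rho> i = u \<and> \<rho> (Suc i) = \<rho> p) \<or> (\<rho> i = \<rho> p \<and> \<rho> (Suc i) = u)"
    by (auto simp: doubleton_eq_iff)
  then show ?thesis
  proof
    assume h: "\<rho> i = u \<and> \<rho> (Suc i) = \<rho> p"
    then have "Suc i = p" using inj assms(2,3) by (auto dest: inj_onD)
    then show ?thesis using h by auto
  next
    assume h: "\<rho> i = \<rho> p \<and> \<rho> (Suc i) = u"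
    then have "i = p" using inj assms(2,3) by (auto dest: inj_onD)
    then show ?thesis using h by auto
  qed
qed

lemma walk_edge_sub: "e \<in> walk_edges r m \<Longrightarrow> e \<subseteq> walk_verts r m"
  unfolding walk_edges_def walk_verts_def by auto

lemma poly_edge_sub: "e \<in> poly_edges q n \<Longrightarrow> e \<subseteq> poly_verts q n"
  unfolding poly_edges_def poly_verts_def by auto

lemma poly_two:
  assumes "sap q n" "p \<in> poly_verts q n"
  shows "\<exists>u v. u \<noteq> v \<and> {p, u} \<in> poly_edges q n \<and> {p, v} \<in> poly_edges q n"
proof -
  from assms obtain i where i: "i < n" "p = q i" unfolding poly_verts_def by auto
  have n3: "3 \<le> n" and inj: "inj_on q {..<n}" using assms(1) unfolding sap_def by auto
  define i' where "i' = (i + n - 1) mod n"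
  have i'n: "i' < n" using n3 unfolding i'_def by auto
  have si': "Suc i' mod n = i"
  proof -
    have "Suc i' mod n = Suc (i + n - 1) mod n" unfolding i'_def by (simp add: mod_Suc_eq)
    also have "Suc (i + n - 1) = i + n" using n3 by auto
    also have "(i + n) mod n = i" using i by simp
    finally show ?thesis .
  qed
  have d: "Suc i mod n \<noteq> i'"
  proof
    assume "Suc i mod n = i'"
    then have "Suc (Suc i mod n) mod n = i" using si' by simp
    then have e: "(i + 2) mod n = i" by (simp add: mod_Suc_eq)
    show False
    proof (cases "i + 2 < n")
      case True then show False using e by simp
    next
      case False
      then have "(i + 2) mod n = (i + 2 - n) mod n" by (simp add: le_mod_geq)
      also have "... = i + 2 - n" using i n3 by simp
      finally show False using e n3 False by simp
    qed
  qed
  have "q (Suc i mod n) \<noteq> q i'"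
  proof
    assume "q (Suc i mod n) = q i'"
    moreover have "Suc i mod n \<in> {..<n}" using n3 by simp
    moreover have "i' \<in> {..<n}" using i'n by simp
    ultimately have "Suc i mod n = i'" using inj by (auto dest: inj_onD)
    then show False using d by simp
  qed
  moreover have "{p, q (Suc i mod n)} \<in> poly_edges q n" using i unfolding poly_edges_def by auto
  moreover have "{p, q i'} \<in> poly_edges q n"
  proof -
    have "{q i', q (Suc i' mod n)} \<in> poly_edges q n" using i'n unfolding poly_edges_def by auto
    then show ?thesis using si' i by (simp add: insert_commute)
  qed
  ultimately show ?thesis by blast
qed


lemma chain:
  assumes "\<forall>i. a \<le> i \<and> i < b \<longrightarrow> (P i \<longleftrightarrow> P (Suc i))"
  shows "a \<le> i \<Longrightarrow> i \<le> b \<Longrightarrow> (P i \<longleftrightarrow> P a)"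
proof (induction i)
  case 0 then show ?case by simp
next
  case (Suc i)
  show ?case
  proof (cases "a = Suc i")
    case True then show ?thesis by simp
  next
    case False
    then have "a \<le> i" using Suc.prems by simp
    then show ?thesis using Suc assms by auto
  qed
qed

lemma detach_struct:
  assumes saw: "saw \<rho> l" and rd: "right_detachable \<rho> l j k"
  shows "0 < j \<and> k < l \<and> j < k \<and> fst (\<rho> j) = fst (\<rho> k) \<and> \<bar>snd (\<rho> j) - snd (\<rho> k)\<bar> = 1
    \<and> \<rho> (j - 1) = (fst (\<rho> j) - 1, snd (\<rho> j)) \<and> \<rho> (Suc k) = (fst (\<rho> k) - 1, snd (\<rho> k))
    \<and> (\<forall>i i'. i \<le> l \<longrightarrow> i' \<le> l \<longrightarrow> j \<le> i \<longrightarrow> i \<le> k \<longrightarrow> \<not> (j \<le> i' \<and> i' \<le> k)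
         \<longrightarrow> snd (\<rho> i) = snd (\<rho> i') \<longrightarrow> fst (\<rho> i') < fst (\<rho> i))"
proof -
  from rd have jk: "j < k" "k \<le> l" unfolding right_detachable_def by auto
  from rd obtain x y r m q n where
    xy: "{\<rho> j, \<rho> k} = {(x,y),(x,y+1)}" and
    HE: "{{(x-1,y),(x,y)},{(x-1,y+1),(x,y+1)}} \<subseteq> walk_edges \<rho> l" and
    VE: "{{(x-1,y),(x-1,y+1)},{(x,y),(x,y+1)}} \<inter> walk_edges \<rho> l = {}" and
    rs: "saw r m" and qs: "sap q n" and
    F0: "(walk_edges \<rho> l - {{(x-1,y),(x,y)},{(x-1,y+1),(x,y+1)}}) \<union> {{(x-1,y),(x-1,y+1)},{(x,y),(x,y+1)}}
          = walk_edges r m \<union> poly_edges q n" and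
    disj: "walk_verts r m \<inter> poly_verts q n = {}" and
    tr: "\<forall>t::int. t>0 \<longrightarrow> (\<lambda>v. (fst v + t, snd v)) ` poly_verts q n \<inter> walk_verts r m = {}"
    using rd unfolding right_detachable_def Let_def by (elim conjE exE) (rule that; assumption)
  define J where "J = \<rho> j"
  define K where "K = \<rho> k"
  define Jp where "Jp = (fst J - 1, snd J)"
  define Kp where "Kp = (fst K - 1, snd K)"
  define E where "E = walk_edges \<rho> l"
  define W where "W = walk_verts r m"
  define Qv where "Qv = poly_verts q n"
  define H where "H = {{Jp,J},{Kp,K}}"
  define V where "V = {{Jp,Kp},{J,K}}"
  have c: "(J = (x,y) \<and> K = (x,y+1)) \<or> (J = (x,y+1) \<and> K = (x,y))"
    using xy unfolding J_def K_def by (auto simp: doubleton_eq_iff)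
  have Hd: "{{(x-1,y),(x,y)},{(x-1,y+1),(x,y+1)}} = H"
    using c by (elim disjE) (auto simp: H_def Jp_def Kp_def insert_commute)
  have Vd: "{{(x-1,y),(x-1,y+1)},{(x,y),(x,y+1)}} = V"
    using c by (elim disjE) (auto simp: V_def Jp_def Kp_def insert_commute)
  have geo: "fst J = fst K" "\<bar>snd J - snd K\<bar> = 1" using c by auto
  have dist: "Jp \<noteq> Kp" "Jp \<noteq> J" "Jp \<noteq> K" "Kp \<noteq> J" "Kp \<noteq> K" "J \<noteq> K"
    using c by (auto simp: Jp_def Kp_def)
  have F: "(E - H) \<union> V = walk_edges r m \<union> poly_edges q n" using F0 Hd Vd E_def by simp
  have HsE: "{Jp,J} \<in> E" "{Kp,K} \<in> E" using HE Hd E_def H_def by auto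
  have JKnE: "{J,K} \<notin> E" using VE Vd E_def V_def by auto
  have inj: "inj_on \<rho> {0..l}" using saw unfolding saw_def by auto
  have injE: "\<And>p p'. p \<le> l \<Longrightarrow> p' \<le> l \<Longrightarrow> \<rho> p = \<rho> p' \<Longrightarrow> p = p'"
    using inj by (auto dest: inj_onD)
  have T: "\<And>u v. {u,v} \<in> (E-H) \<union> V \<Longrightarrow> (u \<in> Qv \<longleftrightarrow> v \<in> Qv)"
  proof -
    fix u v assume "{u,v} \<in> (E-H) \<union> V"
    then have "{u,v} \<in> walk_edges r m \<or> {u,v} \<in> poly_edges q n" using F by auto
    then show "(u \<in> Qv \<longleftrightarrow> v \<in> Qv)"
    proof
      assume "{u,v} \<in> walk_edges r m"
      then have "u \<in> W" "v \<in> W" using walk_edge_sub W_def by blast+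
      then show ?thesis using disj W_def Qv_def by auto
    next
      assume "{u,v} \<in> poly_edges q n"
      then have "u \<in> Qv" "v \<in> Qv" using poly_edge_sub Qv_def by blast+
      then show ?thesis by simp
    qed
  qed
  have Mem: "\<And>u v. {u,v} \<in> (E-H) \<union> V \<Longrightarrow> u \<in> W \<union> Qv"
  proof -
    fix u v assume "{u,v} \<in> (E-H) \<union> V"
    then have "{u,v} \<in> walk_edges r m \<or> {u,v} \<in> poly_edges q n" using F by auto
    then show "u \<in> W \<union> Qv" using walk_edge_sub poly_edge_sub W_def Qv_def by blast
  qed
  have TR: "\<And>p w. p \<in> Qv \<Longrightarrow> w \<in> W \<Longrightarrow> snd p = snd w \<Longrightarrow> fst w \<le> fst p"
  proof (rule ccontr)
    fix p w assume a: "p \<in> Qv" "w \<in> W" "snd p = snd w" "\<not> fst w \<le> fst p"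
    define t where "t = fst w - fst p"
    have "t > 0" using a t_def by simp
    moreover have "(\<lambda>v. (fst v + t, snd v)) p = w" using a t_def by (simp add: prod_eq_iff)
    ultimately show False using tr a W_def Qv_def by blast
  qed
  have V4: "Jp \<in> W \<union> Qv" "Kp \<in> W \<union> Qv" "J \<in> W \<union> Qv" "K \<in> W \<union> Qv"
    using Mem[of Jp Kp] Mem[of Kp Jp] Mem[of J K] Mem[of K J]
    by (auto simp: V_def insert_commute)
  have edge_mem: "\<And>u v. {u,v} \<in> E \<Longrightarrow> u \<in> W \<union> Qv"
  proof -
    fix u v assume a: "{u,v} \<in> E"
    show "u \<in> W \<union> Qv"
    proof (cases "{u,v} \<in> H")
      case True
      then have "u \<in> {Jp,J,Kp,K}" by (auto simp: H_def doubleton_eq_iff)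
      then show ?thesis using V4 by auto
    next
      case False then show ?thesis using a Mem by blast
    qed
  qed
  have Eedge: "\<And>i. i < l \<Longrightarrow> {\<rho> i, \<rho> (Suc i)} \<in> E" unfolding E_def walk_edges_def by auto
  have allin: "\<And>i. i \<le> l \<Longrightarrow> \<rho> i \<in> W \<union> Qv"
  proof -
    fix i assume i: "i \<le> l"
    show "\<rho> i \<in> W \<union> Qv"
    proof (cases "i < l")
      case True then show ?thesis using Eedge edge_mem by blast
    next
      case False
      then have il: "i = l" "0 < l" using i jk by auto
      have "{\<rho> (l-1), \<rho> (Suc (l-1))} \<in> E" using Eedge[of "l-1"] il by simp
      moreover have "Suc (l-1) = l" using il by simp
      ultimately have "{\<rho> (l-1), \<rho> l} \<in> E" by simp
      then have "{\<rho> l, \<rho> (l-1)} \<in> E" using il by (simp add: insert_commute)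
      then show ?thesis using edge_mem il by blast
    qed
  qed
  have Evert: "\<And>u v. {u,v} \<in> E \<Longrightarrow> \<exists>i\<le>l. u = \<rho> i"
  proof -
    fix u v assume "{u,v} \<in> E"
    then obtain i where i: "i < l" "{u,v} = {\<rho> i, \<rho> (Suc i)}" unfolding E_def walk_edges_def by auto
    then have "u = \<rho> i \<or> u = \<rho> (Suc i)" by (auto simp: doubleton_eq_iff)
    then show "\<exists>i\<le>l. u = \<rho> i" 
    proof
      assume "u = \<rho> i" then show ?thesis using i(1) by (intro exI[of _ i]) simp
    next
      assume "u = \<rho> (Suc i)" then show ?thesis using i(1) by (intro exI[of _ "Suc i"]) simp
    qed
  qed
  have Qne: "\<exists>i\<le>l. \<rho> i \<in> Qv"
  proof -
    have n3: "3 \<le> n" using qs sap_def by auto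
    then have q0: "q 0 \<in> Qv" unfolding Qv_def poly_verts_def by auto
    then obtain u where "{q 0, u} \<in> poly_edges q n" using poly_two[OF qs] Qv_def by blast
    then have "{q 0, u} \<in> (E - H) \<union> V" using F by auto
    then have "\<exists>i\<le>l. q 0 = \<rho> i"
    proof
      assume "{q 0, u} \<in> E - H" then show ?thesis using Evert by blast
    next
      assume "{q 0, u} \<in> V"
      then have "q 0 \<in> {Jp,Kp,J,K}" by (auto simp: V_def doubleton_eq_iff)
      moreover have "\<exists>i\<le>l. Jp = \<rho> i" using Evert HsE(1) by blast
      moreover have "\<exists>i\<le>l. Kp = \<rho> i" using Evert HsE(2) by blast
      moreover have "\<exists>i\<le>l. J = \<rho> i" using jk J_def by (intro exI[of _ j]) simp
      moreover have "\<exists>i\<le>l. K = \<rho> i" using jk K_def by (intro exI[of _ k]) simp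
      ultimately show ?thesis by blast
    qed
    then show ?thesis using q0 by auto
  qed
  have Vin: "\<And>p u. {p,u} \<in> V \<Longrightarrow> p \<in> {Jp,Kp,J,K}" by (auto simp: V_def doubleton_eq_iff)
  have Vuniq: "\<And>p u v. {p,u} \<in> V \<Longrightarrow> {p,v} \<in> V \<Longrightarrow> u = v"
    using dist by (auto simp: V_def doubleton_eq_iff)
  have Hpart: "\<And>p. p \<in> {Jp,Kp,J,K} \<Longrightarrow> \<exists>w. {p,w} \<in> H"
  proof -
    have h: "{Jp,J} \<in> H" "{J,Jp} \<in> H" "{Kp,K} \<in> H" "{K,Kp} \<in> H" by (auto simp: H_def insert_commute)
    fix p assume "p \<in> {Jp,Kp,J,K}" then show "\<exists>w. {p,w} \<in> H" using h by blast
  qed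
  have endp: "\<And>p z. (\<And>w. {\<rho> p, w} \<in> E \<Longrightarrow> w = z) \<Longrightarrow> \<rho> p \<notin> Qv"
  proof
    fix p z assume en: "\<And>w. {\<rho> p, w} \<in> E \<Longrightarrow> w = z" and pq: "\<rho> p \<in> Qv"
    obtain u v where uv: "u \<noteq> v" "{\<rho> p,u} \<in> poly_edges q n" "{\<rho> p, v} \<in> poly_edges q n"
      using poly_two[OF qs] pq Qv_def by blast
    then have uvF: "{\<rho> p,u} \<in> (E-H) \<union> V" "{\<rho> p,v} \<in> (E-H) \<union> V" using F by auto
    show False
    proof (cases "{\<rho> p, z} \<in> H")
      case True
      then have "{\<rho> p,u} \<notin> E - H" "{\<rho> p,v} \<notin> E - H" using en by (metis DiffD1 DiffD2)+
      then have "{\<rho> p,u} \<in> V" "{\<rho> p,v} \<in> V" using uvF by auto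
      then show False using Vuniq uv(1) by blast
    next
      case False
      have "{\<rho> p, u} \<notin> V"
      proof
        assume "{\<rho> p, u} \<in> V"
        then obtain w where w: "{\<rho> p, w} \<in> H" using Vin Hpart by blast
        then have "{\<rho> p, w} \<in> E" using HsE H_def by auto
        then have "w = z" using en by blast
        then show False using w False by simp
      qed
      moreover have "{\<rho> p, v} \<notin> V"
      proof
        assume "{\<rho> p, v} \<in> V"
        then obtain w where w: "{\<rho> p, w} \<in> H" using Vin Hpart by blast
        then have "{\<rho> p, w} \<in> E" using HsE H_def by auto
        then have "w = z" using en by blast
        then show False using w False by simp
      qed
      ultimately have "u = z" "v = z" using uvF en by auto
      then show False using uv(1) by simp
    qed
  qed
  have P0: "\<rho> 0 \<notin> Qv"
  proof (rule endp[of 0 "\<rho> 1"])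
    fix w assume "{\<rho> 0, w} \<in> E"
    then obtain i where "i < l" "{\<rho> i, \<rho> (Suc i)} = {w, \<rho> 0}"
      unfolding E_def walk_edges_def by (auto simp: insert_commute)
    then show "w = \<rho> 1" using edge_eq[OF saw, of i 0 w] by auto
  qed
  have Pl: "\<rho> l \<notin> Qv"
  proof (rule endp[of l "\<rho> (l-1)"])
    fix w assume "{\<rho> l, w} \<in> E"
    then obtain i where "i < l" "{\<rho> i, \<rho> (Suc i)} = {w, \<rho> l}"
      unfolding E_def walk_edges_def by (auto simp: insert_commute)
    then show "w = \<rho> (l-1)" using edge_eq[OF saw, of i l w] by auto
  qed
  have Prop: "\<And>i. i < l \<Longrightarrow> {\<rho> i, \<rho> (Suc i)} \<notin> H \<Longrightarrow> (\<rho> i \<in> Qv \<longleftrightarrow> \<rho> (Suc i) \<in> Qv)"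
    using T Eedge by blast
  have Hchar: "\<And>i. i < l \<Longrightarrow> {\<rho> i, \<rho> (Suc i)} \<in> H \<Longrightarrow>
      (i = j \<and> \<rho> (Suc j) = Jp) \<or> (Suc i = j \<and> \<rho> i = Jp) \<or> (i = k \<and> \<rho> (Suc k) = Kp) \<or> (Suc i = k \<and> \<rho> i = Kp)"
  proof -
    fix i assume i: "i < l" "{\<rho> i, \<rho> (Suc i)} \<in> H"
    then have "{\<rho> i, \<rho> (Suc i)} = {Jp, \<rho> j} \<or> {\<rho> i, \<rho> (Suc i)} = {Kp, \<rho> k}"
      by (auto simp: H_def J_def K_def)
    then show "?thesis i" using edge_eq[OF saw i(1), of j Jp] edge_eq[OF saw i(1), of k Kp] jk by auto
  qed
  have cJ: "(j < l \<and> \<rho> (Suc j) = Jp) \<or> (0 < j \<and> \<rho> (j-1) = Jp)"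
  proof -
    from HsE(1) obtain i where i: "i < l" "{Jp, J} = {\<rho> i, \<rho> (Suc i)}" unfolding E_def walk_edges_def by blast
    then have i2: "{\<rho> i, \<rho> (Suc i)} = {Jp, \<rho> j}" using J_def by simp
    show ?thesis using edge_eq[OF saw i(1) _ i2] jk i(1) by auto
  qed
  have cK: "(k < l \<and> \<rho> (Suc k) = Kp) \<or> (0 < k \<and> \<rho> (k-1) = Kp)"
  proof -
    from HsE(2) obtain i where i: "i < l" "{Kp, K} = {\<rho> i, \<rho> (Suc i)}" unfolding E_def walk_edges_def by blast
    then have i2: "{\<rho> i, \<rho> (Suc i)} = {Kp, \<rho> k}" using K_def by simp
    show ?thesis using edge_eq[OF saw i(1) _ i2] jk i(1) by auto
  qed
  have noH: "\<And>i. i < l \<Longrightarrow> \<not> ((i = j \<and> \<rho> (Suc j) = Jp) \<or> (Suc i = j \<and> \<rho> i = Jp) \<or> (i = k \<and> \<rho> (Suc k) = Kp) \<or> (Suc i = k \<and> \<rho> i = Kp))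
      \<Longrightarrow> (\<rho> i \<in> Qv \<longleftrightarrow> \<rho> (Suc i) \<in> Qv)" using Prop Hchar by blast
  have noH': "\<And>i. i < l \<Longrightarrow> (i = j \<Longrightarrow> \<rho> (Suc j) \<noteq> Jp) \<Longrightarrow> (Suc i = j \<Longrightarrow> \<rho> i \<noteq> Jp)
      \<Longrightarrow> (i = k \<Longrightarrow> \<rho> (Suc k) \<noteq> Kp) \<Longrightarrow> (Suc i = k \<Longrightarrow> \<rho> i \<noteq> Kp)
      \<Longrightarrow> (\<rho> i \<in> Qv \<longleftrightarrow> \<rho> (Suc i) \<in> Qv)" using noH by blast
  have JKV: "{J,K} \<in> (E - H) \<union> V" by (simp add: V_def)
  have B: "0 < j \<and> \<rho> (j-1) = Jp"
  proof -
    have "\<not> (j < l \<and> \<rho> (Suc j) = Jp)"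
    proof
      assume A: "j < l \<and> \<rho> (Suc j) = Jp"
      have s1: "\<forall>i. 0 \<le> i \<and> i < j \<longrightarrow> (\<rho> i \<in> Qv \<longleftrightarrow> \<rho> (Suc i) \<in> Qv)"
      proof (intro allI impI)
        fix i assume i: "0 \<le> i \<and> i < j"
        have "\<rho> i \<noteq> \<rho> (Suc j)" using injE[of i "Suc j"] i A jk by auto
        note nn = this show "\<rho> i \<in> Qv \<longleftrightarrow> \<rho> (Suc i) \<in> Qv" apply (rule noH') using nn i A jk by auto
      qed
      have low: "\<And>i. i \<le> j \<Longrightarrow> \<rho> i \<notin> Qv" using chain[OF s1] P0 by blast
      then have "J \<notin> Qv" using J_def by simp
      then have KQ: "K \<notin> Qv" using T[OF JKV] by simp
      show False using cK
      proof
        assume Kc: "k < l \<and> \<rho> (Suc k) = Kp"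
        have s2: "\<forall>i. Suc j \<le> i \<and> i < k \<longrightarrow> (\<rho> i \<in> Qv \<longleftrightarrow> \<rho> (Suc i) \<in> Qv)"
        proof (intro allI impI)
          fix i assume i: "Suc j \<le> i \<and> i < k"
          have "\<rho> i \<noteq> \<rho> (Suc k)" using injE[of i "Suc k"] i Kc jk by auto
          note nn = this show "\<rho> i \<in> Qv \<longleftrightarrow> \<rho> (Suc i) \<in> Qv" apply (rule noH') using nn i Kc jk by auto
        qed
        have s3: "\<forall>i. Suc k \<le> i \<and> i < l \<longrightarrow> (\<rho> i \<in> Qv \<longleftrightarrow> \<rho> (Suc i) \<in> Qv)"
        proof (intro allI impI)
          fix i assume i: "Suc k \<le> i \<and> i < l"
          show "\<rho> i \<in> Qv \<longleftrightarrow> \<rho> (Suc i) \<in> Qv" apply (rule noH') using i jk by auto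
        qed
        have "\<forall>i\<le>l. \<rho> i \<notin> Qv"
        proof (intro allI impI)
          fix i assume il: "i \<le> l"
          show "\<rho> i \<notin> Qv"
          proof (cases "i \<le> j")
            case True then show ?thesis using low by simp
          next
            case False
            show ?thesis
            proof (cases "i \<le> k")
              case True
              have "(\<rho> i \<in> Qv) = (\<rho> (Suc j) \<in> Qv)" using chain[OF s2, of i] True False by simp
              moreover have "(\<rho> k \<in> Qv) = (\<rho> (Suc j) \<in> Qv)" using chain[OF s2, of k] jk by simp
              ultimately show ?thesis using KQ K_def by simp
            next
              case F2: False
              have "(\<rho> i \<in> Qv) = (\<rho> (Suc k) \<in> Qv)" using chain[OF s3, of i] F2 il by simp
              moreover have "(\<rho> l \<in> Qv) = (\<rho> (Suc k) \<in> Qv)" using chain[OF s3, of l] Kc by simp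
              ultimately show ?thesis using Pl by simp
            qed
          qed
        qed
        then show False using Qne by blast
      next
        assume Kc: "0 < k \<and> \<rho> (k-1) = Kp"
        have s3: "\<forall>i. k \<le> i \<and> i < l \<longrightarrow> (\<rho> i \<in> Qv \<longleftrightarrow> \<rho> (Suc i) \<in> Qv)"
        proof (intro allI impI)
          fix i assume i: "k \<le> i \<and> i < l"
          have "\<rho> (Suc k) \<noteq> \<rho> (k-1)" if "i = k"
        proof
          assume e: "\<rho> (Suc k) = \<rho> (k-1)"
          have "Suc k \<le> l" "k - 1 \<le> l" using i that by auto
          then have "Suc k = k - 1" using injE e by blast
          then show False by simp
        qed
          note nn = this show "\<rho> i \<in> Qv \<longleftrightarrow> \<rho> (Suc i) \<in> Qv" apply (rule noH') using nn i Kc jk by auto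
        qed
        have s2: "\<forall>i. Suc j \<le> i \<and> i < k - 1 \<longrightarrow> (\<rho> i \<in> Qv \<longleftrightarrow> \<rho> (Suc i) \<in> Qv)"
        proof (intro allI impI)
          fix i assume i: "Suc j \<le> i \<and> i < k - 1"
          show "\<rho> i \<in> Qv \<longleftrightarrow> \<rho> (Suc i) \<in> Qv" apply (rule noH') using i jk by auto
        qed
        obtain i0 where i0: "i0 \<le> l" "\<rho> i0 \<in> Qv" using Qne by blast
        have "\<not> i0 \<le> j" using low i0 by blast
        moreover have "\<not> k \<le> i0"
        proof
          assume "k \<le> i0"
          then have "(\<rho> i0 \<in> Qv) = (\<rho> k \<in> Qv)" using chain[OF s3, of i0] i0 by simp
          then show False using KQ K_def i0 by simp
        qed
        ultimately have "(\<rho> i0 \<in> Qv) = (\<rho> (Suc j) \<in> Qv)" using chain[OF s2, of i0] by simp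
        then have "Jp \<in> Qv" using A i0 by simp
        moreover have "J \<in> W" using allin[of j] jk J_def \<open>J \<notin> Qv\<close> by auto
        ultimately have "fst J \<le> fst Jp" using TR[of Jp J] Jp_def by simp
        then show False using Jp_def by simp
      qed
    qed
    then show ?thesis using cJ by blast
  qed
  have s1: "\<forall>i. 0 \<le> i \<and> i < j - 1 \<longrightarrow> (\<rho> i \<in> Qv \<longleftrightarrow> \<rho> (Suc i) \<in> Qv)"
  proof (intro allI impI)
    fix i assume i: "0 \<le> i \<and> i < j - 1"
    show "\<rho> i \<in> Qv \<longleftrightarrow> \<rho> (Suc i) \<in> Qv" apply (rule noH') using i jk by auto
  qed
  have low: "\<And>i. i < j \<Longrightarrow> \<rho> i \<notin> Qv"
  proof -
    fix i assume "i < j"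
    then have "(\<rho> i \<in> Qv) = (\<rho> 0 \<in> Qv)" using chain[OF s1, of i] by simp
    then show "\<rho> i \<notin> Qv" using P0 by simp
  qed
  have Bsj: "\<rho> (Suc j) \<noteq> \<rho> (j - 1)"
  proof
    assume e: "\<rho> (Suc j) = \<rho> (j - 1)"
    have "Suc j \<le> l" "j - 1 \<le> l" using jk by auto
    then have "Suc j = j - 1" using injE e by blast
    then show False by simp
  qed
  have Kc: "k < l \<and> \<rho> (Suc k) = Kp"
  proof -
    have "\<not> (0 < k \<and> \<rho> (k-1) = Kp)"
    proof
      assume Kc: "0 < k \<and> \<rho> (k-1) = Kp"
      have s3: "\<forall>i. k \<le> i \<and> i < l \<longrightarrow> (\<rho> i \<in> Qv \<longleftrightarrow> \<rho> (Suc i) \<in> Qv)"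
      proof (intro allI impI)
        fix i assume i: "k \<le> i \<and> i < l"
        have "\<rho> (Suc k) \<noteq> \<rho> (k-1)" if "i = k"
        proof
          assume e: "\<rho> (Suc k) = \<rho> (k-1)"
          have "Suc k \<le> l" "k - 1 \<le> l" using i that by auto
          then have "Suc k = k - 1" using injE e by blast
          then show False by simp
        qed
        note nn = this show "\<rho> i \<in> Qv \<longleftrightarrow> \<rho> (Suc i) \<in> Qv" apply (rule noH') using nn i Kc jk by auto
      qed
      have high: "\<And>i. k \<le> i \<Longrightarrow> i \<le> l \<Longrightarrow> \<rho> i \<notin> Qv"
      proof -
        fix i assume "k \<le> i" "i \<le> l"
        then have "(\<rho> i \<in> Qv) = (\<rho> k \<in> Qv)" "(\<rho> l \<in> Qv) = (\<rho> k \<in> Qv)" using chain[OF s3, of i] chain[OF s3, of l] jk by auto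
        then show "\<rho> i \<notin> Qv" using Pl by simp
      qed
      then have "K \<notin> Qv" using K_def jk by simp
      then have JQ: "J \<notin> Qv" using T[OF JKV] by simp
      have s2: "\<forall>i. j \<le> i \<and> i < k - 1 \<longrightarrow> (\<rho> i \<in> Qv \<longleftrightarrow> \<rho> (Suc i) \<in> Qv)"
      proof (intro allI impI)
        fix i assume i: "j \<le> i \<and> i < k - 1"
        show "\<rho> i \<in> Qv \<longleftrightarrow> \<rho> (Suc i) \<in> Qv" apply (rule noH') using i jk B Bsj by auto
      qed
      obtain i0 where i0: "i0 \<le> l" "\<rho> i0 \<in> Qv" using Qne by blast
      have "\<not> i0 < j" using low i0 by blast
      moreover have "\<not> k \<le> i0" using high i0 by blast
      ultimately have "(\<rho> i0 \<in> Qv) = (\<rho> j \<in> Qv)" using chain[OF s2, of i0] by simp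
      then show False using JQ J_def i0 by simp
    qed
    then show ?thesis using cK by blast
  qed
  have s3: "\<forall>i. Suc k \<le> i \<and> i < l \<longrightarrow> (\<rho> i \<in> Qv \<longleftrightarrow> \<rho> (Suc i) \<in> Qv)"
  proof (intro allI impI)
    fix i assume i: "Suc k \<le> i \<and> i < l"
    show "\<rho> i \<in> Qv \<longleftrightarrow> \<rho> (Suc i) \<in> Qv" apply (rule noH') using i jk by auto
  qed
  have high: "\<And>i. k < i \<Longrightarrow> i \<le> l \<Longrightarrow> \<rho> i \<notin> Qv"
  proof -
    fix i assume "k < i" "i \<le> l"
    then have "(\<rho> i \<in> Qv) = (\<rho> (Suc k) \<in> Qv)" "(\<rho> l \<in> Qv) = (\<rho> (Suc k) \<in> Qv)"
      using chain[OF s3, of i] chain[OF s3, of l] Kc by auto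
    then show "\<rho> i \<notin> Qv" using Pl by simp
  qed
  have s2: "\<forall>i. j \<le> i \<and> i < k \<longrightarrow> (\<rho> i \<in> Qv \<longleftrightarrow> \<rho> (Suc i) \<in> Qv)"
  proof (intro allI impI)
    fix i assume i: "j \<le> i \<and> i < k"
    have "\<rho> i \<noteq> \<rho> (Suc k)" using injE[of i "Suc k"] i Kc jk by auto
    note nn = this show "\<rho> i \<in> Qv \<longleftrightarrow> \<rho> (Suc i) \<in> Qv" apply (rule noH') using nn i Kc jk B Bsj by auto
  qed
  have mid: "\<And>i. j \<le> i \<Longrightarrow> i \<le> k \<Longrightarrow> \<rho> i \<in> Qv"
  proof -
    obtain i0 where i0: "i0 \<le> l" "\<rho> i0 \<in> Qv" using Qne by blast
    have "\<not> i0 < j" using low i0 by blast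
    moreover have "\<not> k < i0" using high i0 by blast
    ultimately have Pj: "\<rho> j \<in> Qv" using chain[OF s2, of i0] i0 by simp
    fix i assume "j \<le> i" "i \<le> k"
    then show "\<rho> i \<in> Qv" using chain[OF s2, of i] Pj by simp
  qed
  have ord: "\<forall>i i'. i \<le> l \<longrightarrow> i' \<le> l \<longrightarrow> j \<le> i \<longrightarrow> i \<le> k \<longrightarrow> \<not> (j \<le> i' \<and> i' \<le> k)
         \<longrightarrow> snd (\<rho> i) = snd (\<rho> i') \<longrightarrow> fst (\<rho> i') < fst (\<rho> i)"
  proof (intro allI impI)
    fix i i' assume a: "i \<le> l" "i' \<le> l" "j \<le> i" "i \<le> k" "\<not> (j \<le> i' \<and> i' \<le> k)" "snd (\<rho> i) = snd (\<rho> i')"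
    have iQ: "\<rho> i \<in> Qv" using mid a by simp
    have "\<rho> i' \<notin> Qv" using low high a by (meson not_le)
    then have iW: "\<rho> i' \<in> W" using allin[of i'] a by auto
    have le: "fst (\<rho> i') \<le> fst (\<rho> i)" using TR[OF iQ iW] a by simp
    have "\<rho> i' \<noteq> \<rho> i" using iQ iW disj W_def Qv_def by auto
    then have "fst (\<rho> i') \<noteq> fst (\<rho> i)" using a(6) by (auto simp: prod_eq_iff)
    then show "fst (\<rho> i') < fst (\<rho> i)" using le by simp
  qed
  show ?thesis using B Kc jk geo ord J_def K_def Jp_def Kp_def by simp
qed


lemma ivt:
  fixes f :: "nat \<Rightarrow> int"
  assumes st: "\<forall>i. a \<le> i \<and> i < b \<longrightarrow> \<bar>f (Suc i) - f i\<bar> \<le> 1"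
  shows "a \<le> b \<Longrightarrow> min (f a) (f b) \<le> r \<Longrightarrow> r \<le> max (f a) (f b) \<Longrightarrow> \<exists>i. a \<le> i \<and> i \<le> b \<and> f i = r"
  using st
proof (induction b)
  case 0 then show ?case by auto
next
  case (Suc b)
  show ?case
  proof (cases "a = Suc b")
    case True then show ?thesis using Suc.prems by auto
  next
    case False
    then have ab: "a \<le> b" using Suc.prems by simp
    show ?thesis
    proof (cases "min (f a) (f b) \<le> r \<and> r \<le> max (f a) (f b)")
      case True
      then obtain i where "a \<le> i \<and> i \<le> b \<and> f i = r" using Suc.IH ab Suc.prems by auto
      then show ?thesis by (intro exI[of _ i]) auto
    next
      case F2: False
      have "\<bar>f (Suc b) - f b\<bar> \<le> 1" using Suc.prems ab by auto
      then have "f (Suc b) = r" using F2 Suc.prems(2,3) by (auto simp: min_def max_def abs_if split: if_splits)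
      then show ?thesis using Suc.prems by (intro exI[of _ "Suc b"]) auto
    qed
  qed
qed

lemma main_ord:
  assumes saw: "saw \<rho> l"
    and d1: "right_detachable \<rho> l j1 k1" and d2: "right_detachable \<rho> l j2 k2"
    and lt: "k1 < k2" and hh: "k1 - j1 = k2 - j2"
  shows "k1 - j1 \<le> k2 - k1"
proof (rule ccontr)
  assume "\<not> k1 - j1 \<le> k2 - k1"
  note S1 = detach_struct[OF saw d1] and S2 = detach_struct[OF saw d2]
  have o: "j1 < j2" "j2 < k1" "k1 < k2" "0 < j1" "k2 < l" "j1 < k1" "j2 < k2"
    using S1 S2 lt hh \<open>\<not> k1 - j1 \<le> k2 - k1\<close> by auto
  have ord1: "\<And>i i'. i \<le> l \<Longrightarrow> i' \<le> l \<Longrightarrow> j1 \<le> i \<Longrightarrow> i \<le> k1 \<Longrightarrow> \<not> (j1 \<le> i' \<and> i' \<le> k1)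
         \<Longrightarrow> snd (\<rho> i) = snd (\<rho> i') \<Longrightarrow> fst (\<rho> i') < fst (\<rho> i)" using S1 by blast
  have ord2: "\<And>i i'. i \<le> l \<Longrightarrow> i' \<le> l \<Longrightarrow> j2 \<le> i \<Longrightarrow> i \<le> k2 \<Longrightarrow> \<not> (j2 \<le> i' \<and> i' \<le> k2)
         \<Longrightarrow> snd (\<rho> i) = snd (\<rho> i') \<Longrightarrow> fst (\<rho> i') < fst (\<rho> i)" using S2 by blast
  have step: "\<forall>i. 0 \<le> i \<and> i < l \<longrightarrow> \<bar>snd (\<rho> (Suc i)) - snd (\<rho> i)\<bar> \<le> 1"
    using saw unfolding saw_def nbr_def by (auto simp: abs_minus_commute)
  have sepAB: "\<And>i i'. j1 \<le> i \<Longrightarrow> i \<le> j2 - 1 \<Longrightarrow> Suc k1 \<le> i' \<Longrightarrow> i' \<le> k2 \<Longrightarrow> snd (\<rho> i) \<noteq> snd (\<rho> i')"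
  proof
    fix i i' assume a: "j1 \<le> i" "i \<le> j2 - 1" "Suc k1 \<le> i'" "i' \<le> k2" "snd (\<rho> i) = snd (\<rho> i')"
    have "fst (\<rho> i') < fst (\<rho> i)" apply (rule ord1[of i i']) using a o by auto
    moreover have "fst (\<rho> i) < fst (\<rho> i')" apply (rule ord2[of i' i]) using a o by auto
    ultimately show False by simp
  qed
  define u where "u = snd (\<rho> j1)"
  define u' where "u' = snd (\<rho> k1)"
  define v where "v = snd (\<rho> j2)"
  define v' where "v' = snd (\<rho> k2)"
  have e1: "\<rho> (j1 - 1) = (fst (\<rho> j1) - 1, u)" "\<rho> (Suc k1) = (fst (\<rho> k1) - 1, u')" using S1 u_def u'_def by auto
  have e2: "\<rho> (j2 - 1) = (fst (\<rho> j2) - 1, v)" "\<rho> (Suc k2) = (fst (\<rho> k2) - 1, v')" using S2 v_def v'_def by auto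
  have x1: "fst (\<rho> j1) = fst (\<rho> k1)" "\<bar>u - u'\<bar> = 1" using S1 u_def u'_def by auto
  have x2: "fst (\<rho> j2) = fst (\<rho> k2)" "\<bar>v - v'\<bar> = 1" using S2 v_def v'_def by auto
  have inA: "\<And>r. min u v \<le> r \<Longrightarrow> r \<le> max u v \<Longrightarrow> \<exists>i. j1 \<le> i \<and> i \<le> j2 - 1 \<and> snd (\<rho> i) = r"
  proof -
    fix r assume r: "min u v \<le> r" "r \<le> max u v"
    have st: "\<forall>i. j1 \<le> i \<and> i < j2 - 1 \<longrightarrow> \<bar>snd (\<rho> (Suc i)) - snd (\<rho> i)\<bar> \<le> 1" using step o by auto
    show "\<exists>i. j1 \<le> i \<and> i \<le> j2 - 1 \<and> snd (\<rho> i) = r"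
      using ivt[OF st, of r] o r e2(1) u_def by auto
  qed
  have inB: "\<And>r. min u' v' \<le> r \<Longrightarrow> r \<le> max u' v' \<Longrightarrow> \<exists>i. Suc k1 \<le> i \<and> i \<le> k2 \<and> snd (\<rho> i) = r"
  proof -
    fix r assume r: "min u' v' \<le> r" "r \<le> max u' v'"
    have st: "\<forall>i. Suc k1 \<le> i \<and> i < k2 \<longrightarrow> \<bar>snd (\<rho> (Suc i)) - snd (\<rho> i)\<bar> \<le> 1" using step o by auto
    show "\<exists>i. Suc k1 \<le> i \<and> i \<le> k2 \<and> snd (\<rho> i) = r"
      using ivt[OF st, of r] o r e1(2) v'_def by auto
  qed
  have key: "\<And>r. min u v \<le> r \<Longrightarrow> r \<le> max u v \<Longrightarrow> min u' v' \<le> r \<Longrightarrow> r \<le> max u' v' \<Longrightarrow> False"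
  proof -
    fix r assume r: "min u v \<le> r" "r \<le> max u v" "min u' v' \<le> r" "r \<le> max u' v'"
    obtain i where i: "j1 \<le> i" "i \<le> j2 - 1" "snd (\<rho> i) = r" using inA r by blast
    obtain i' where i': "Suc k1 \<le> i'" "i' \<le> k2" "snd (\<rho> i') = r" using inB r by blast
    show False using sepAB[OF i(1,2) i'(1,2)] i(3) i'(3) by simp
  qed
  have sep: "max u v < min u' v' \<or> max u' v' < min u v"
  proof (rule ccontr)
    assume nt: "\<not> ?thesis"
    show False using nt apply - apply (rule key[of "max (min u v) (min u' v')"]) by (auto simp: min_def max_def split: if_splits)
  qed
  have uv: "u = v \<and> u' = v'" using sep x1(2) x2(2) by (auto simp: min_def max_def abs_if split: if_splits)
  have "fst (\<rho> (j1 - 1)) < fst (\<rho> (j2 - 1))" apply (rule ord1[of "j2 - 1" "j1 - 1"]) using o e1 e2 uv by auto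
  moreover have "fst (\<rho> (Suc k2)) < fst (\<rho> (Suc k1))" apply (rule ord2[of "Suc k1" "Suc k2"]) using o e1 e2 uv by auto
  ultimately show False using e1 e2 x1 x2 by simp
qed

theorem mainTheorem11:
  fixes \<rho> :: "nat \<Rightarrow> int \<times> int" and l h j1 k1 j2 k2 :: nat
  assumes "saw \<rho> l"
    and "\<forall>i\<le>l. snd (\<rho> 0) \<le> snd (\<rho> i)"
    and "\<forall>i\<le>l. snd (\<rho> i) \<le> snd (\<rho> l)"
    and "(j1, k1) \<noteq> (j2, k2)"
    and "right_detachable \<rho> l j1 k1" and "k1 - j1 = h"
    and "right_detachable \<rho> l j2 k2" and "k2 - j2 = h"
  shows "\<bar>int k2 - int k1\<bar> \<ge> int h"
proof -
  have jk: "j1 < k1" "j2 < k2" using assms(5,7) unfolding right_detachable_def by auto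
  consider "k1 < k2" | "k2 < k1" | "k1 = k2" by linarith
  then show ?thesis
  proof cases
    case 1
    then have "k1 - j1 \<le> k2 - k1" using main_ord[OF assms(1,5,7)] assms(6,8) by simp
    then show ?thesis using 1 assms(6) by linarith
  next
    case 2
    then have "k2 - j2 \<le> k1 - k2" using main_ord[OF assms(1,7,5)] assms(6,8) by simp
    then show ?thesis using 2 assms(8) by linarith
  next
    case 3
    then have "j1 = j2" using jk assms(6,8) by linarith
    then show ?thesis using 3 assms(4) by simp
  qed
qed

end
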